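(* Let $(X,d)$ be a compact metric space and $F:X\to 2^X$ a set-valued map which is open, onto and continuous. Then $F$ has the shadowing property if and only if $F^{-1}$ has the shadowing property.
   Context: $2^X$ is the family of nonempty compact subsets of $X$. A set-valued map $F$ is upper semicontinuous if for every $x$ and open $U\supset F(x)$ there is a neighborhood $V$ of $x$ with $F(y)\subset U$ for $y\in V$; lower semicontinuous if for every $x$ and open $U$ with $F(x)\cap U\ne\emptyset$ there is a neighborhood $V$ of $x$ with $F(y)\cap U\neq\emptyset$ for $y\in V$; continuous if both. $F$ is open if $F(U)=\bigcup_{u\in U}F(u)$ is open for every open $U$. $F$ is onto if every $y\in X$ lies in some $F(x)$; then $F^{-1}(y)=\{x:y\in F(x)\}$. For a set-valued map $G$, a $\delta$-pseudo-orbit is a sequence $\{x_n\}_{n\ge0}$ with $d(x_{n+1},G(x_n))<\delta$ for all $n$; a $G$-orbit is $(y_n)$ with $y_{n+1}\in G(y_n)$; $G$ has the shadowing property if for every $\varepsilon>0$ there is $\delta>0$ such that every $\delta$-pseudo-orbit $\{x_n\}$ admits a $G$-orbit $(y_n)$ with $d(x_n,y_n)<\varepsilon$ for all $n$. *)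

theory Defs
  imports "HOL-Analysis.Analysis"
begin

text \<open>The ambient compact metric space is a set X in a metric space type, with the
subspace topology. A set-valued map is a function F :: 'a => 'a set; values are
only relevant at points of X.\<close>

definition sv_map_into :: "'a::metric_space set \<Rightarrow> ('a \<Rightarrow> 'a set) \<Rightarrow> bool" where
  "sv_map_into X F \<longleftrightarrow> (\<forall>x\<in>X. F x \<noteq> {} \<and> compact (F x) \<and> F x \<subseteq> X)"

definition usc_on :: "'a::metric_space set \<Rightarrow> ('a \<Rightarrow> 'a set) \<Rightarrow> bool" where
  "usc_on X F \<longleftrightarrow> (\<forall>x\<in>X. \<forall>U. openin (top_of_set X) U \<and> F x \<subseteq> U \<longrightarrow>
      (\<exists>V. openin (top_of_set X) V \<and> x \<in> V \<and> (\<forall>y\<in>V. F y \<subseteq> U)))"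

definition lsc_on :: "'a::metric_space set \<Rightarrow> ('a \<Rightarrow> 'a set) \<Rightarrow> bool" where
  "lsc_on X F \<longleftrightarrow> (\<forall>x\<in>X. \<forall>U. openin (top_of_set X) U \<and> F x \<inter> U \<noteq> {} \<longrightarrow>
      (\<exists>V. openin (top_of_set X) V \<and> x \<in> V \<and> (\<forall>y\<in>V. F y \<inter> U \<noteq> {})))"

definition sv_continuous_on :: "'a::metric_space set \<Rightarrow> ('a \<Rightarrow> 'a set) \<Rightarrow> bool" where
  "sv_continuous_on X F \<longleftrightarrow> usc_on X F \<and> lsc_on X F"

definition sv_open_map :: "'a::metric_space set \<Rightarrow> ('a \<Rightarrow> 'a set) \<Rightarrow> bool" where
  "sv_open_map X F \<longleftrightarrow> (\<forall>U. openin (top_of_set X) U \<longrightarrow> openin (top_of_set X) (\<Union>u\<in>U. F u))"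

definition sv_onto :: "'a::metric_space set \<Rightarrow> ('a \<Rightarrow> 'a set) \<Rightarrow> bool" where
  "sv_onto X F \<longleftrightarrow> (\<forall>y\<in>X. \<exists>x\<in>X. y \<in> F x)"

definition sv_inverse :: "'a set \<Rightarrow> ('a \<Rightarrow> 'a set) \<Rightarrow> 'a \<Rightarrow> 'a set" where
  "sv_inverse X F y = {x\<in>X. y \<in> F x}"

definition pseudo_orbit :: "'a::metric_space set \<Rightarrow> ('a \<Rightarrow> 'a set) \<Rightarrow> real \<Rightarrow> (nat \<Rightarrow> 'a) \<Rightarrow> bool" where
  "pseudo_orbit X G \<delta> xs \<longleftrightarrow> (\<forall>n. xs n \<in> X) \<and> (\<forall>n. infdist (xs (Suc n)) (G (xs n)) < \<delta>)"

definition sv_orbit :: "'a set \<Rightarrow> ('a \<Rightarrow> 'a set) \<Rightarrow> (nat \<Rightarrow> 'a) \<Rightarrow> bool" where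
  "sv_orbit X G ys \<longleftrightarrow> (\<forall>n. ys n \<in> X) \<and> (\<forall>n. ys (Suc n) \<in> G (ys n))"

definition shadowing :: "'a::metric_space set \<Rightarrow> ('a \<Rightarrow> 'a set) \<Rightarrow> bool" where
  "shadowing X G \<longleftrightarrow> (\<forall>\<epsilon>>0. \<exists>\<delta>>0. \<forall>xs. pseudo_orbit X G \<delta> xs \<longrightarrow>
      (\<exists>ys. sv_orbit X G ys \<and> (\<forall>n. dist (xs n) (ys n) < \<epsilon>)))"

end

theory Submission
  imports Defs
begin


lemma infdist_lessE:
  assumes "A \<noteq> {}" "infdist x A < d"
  shows "\<exists>a\<in>A. dist x a < d"
proof -
  have "(INF a\<in>A. dist x a) < d" using assms infdist_notempty by metis
  then show ?thesis using cINF_less_iff[OF assms(1) bdd_below_image_dist, of x d] by simp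
qed

lemma compact_seqspace:
  assumes "compact (X::'a::metric_space set)"
  shows "compact {f::nat\<Rightarrow>'a. \<forall>i. f i \<in> X}"
proof -
  have c1: "compactin (product_topology (\<lambda>i. euclidean) UNIV) (PiE UNIV (\<lambda>i. X))"
    using assms by (simp add: compactin_PiE)
  have c2: "compactin euclidean (PiE UNIV (\<lambda>i::nat. X))"
    using c1 by (simp only: euclidean_product_topology)
  have eq: "PiE UNIV (\<lambda>i. X) = {f::nat\<Rightarrow>'a. \<forall>i. f i \<in> X}"
    by (auto simp: PiE_UNIV_domain)
  show ?thesis using c2 unfolding eq by simp
qed

lemma limit_orbit:
  fixes X :: "'a::metric_space set" and H :: "'a \<Rightarrow> 'a set"
  assumes X: "compact X"
    and gr: "closed {p. fst p \<in> X \<and> snd p \<in> H (fst p)}"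
    and W: "\<And>N j. W N j \<in> X" "\<And>N j. j < N \<Longrightarrow> W N (Suc j) \<in> H (W N j)"
      "\<And>N j. dist (xs j) (W N j) \<le> r"
  shows "\<exists>w. (\<forall>n. w n \<in> X) \<and> (\<forall>n. w (Suc n) \<in> H (w n)) \<and> (\<forall>n. dist (xs n) (w n) \<le> r)"
proof -
  have "seq_compact {f::nat\<Rightarrow>'a. \<forall>i. f i \<in> X}"
    by (intro compact_imp_seq_compact compact_seqspace X)
  then obtain l s where l: "l \<in> {f::nat\<Rightarrow>'a. \<forall>i. f i \<in> X}" and s: "strict_mono (s::nat\<Rightarrow>nat)"
     and lim: "(W \<circ> s) \<longlonglongrightarrow> l"
  proof -
    have "\<forall>n. W n \<in> {f::nat\<Rightarrow>'a. \<forall>i. f i \<in> X}" using W(1) by simp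
    from seq_compactE[OF \<open>seq_compact _\<close> this] show ?thesis using that by blast
  qed
  have coord: "(\<lambda>k. W (s k) j) \<longlonglongrightarrow> l j" for j
  proof -
    have "isCont (\<lambda>x::nat\<Rightarrow>'a. x j) l"
      using continuous_on_product_coordinates[of j] continuous_on_eq_continuous_at[of UNIV "\<lambda>x::nat\<Rightarrow>'a. x j"]
      by simp
    from isCont_tendsto_compose[OF this lim] show ?thesis by (simp add: o_def)
  qed
  have "l (Suc n) \<in> H (l n)" for n
  proof -
    have "(\<lambda>k. (W (s k) n, W (s k) (Suc n))) \<longlonglongrightarrow> (l n, l (Suc n))"
      by (intro tendsto_Pair coord)
    moreover have "eventually (\<lambda>k. (W (s k) n, W (s k) (Suc n)) \<in> {p. fst p \<in> X \<and> snd p \<in> H (fst p)}) sequentially"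
    proof (rule eventually_sequentiallyI[of "Suc n"])
      fix k assume "Suc n \<le> k"
      then have "n < s k" using seq_suble[OF s, of k] by simp
      then show "(W (s k) n, W (s k) (Suc n)) \<in> {p. fst p \<in> X \<and> snd p \<in> H (fst p)}"
        using W by auto
    qed
    ultimately have "(l n, l (Suc n)) \<in> {p. fst p \<in> X \<and> snd p \<in> H (fst p)}"
      by (intro Lim_in_closed_set[OF gr]) simp_all
    then show ?thesis by simp
  qed
  moreover have "dist (xs n) (l n) \<le> r" for n
  proof -
    have "(\<lambda>k. dist (xs n) (W (s k) n)) \<longlonglongrightarrow> dist (xs n) (l n)"
      by (intro tendsto_intros coord)
    then show ?thesis
      by (rule tendsto_upperbound) (auto simp: W(3))
  qed
  ultimately show ?thesis using l by blast
qed



lemma closed_graph: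
  fixes X :: "'a::metric_space set" and F :: "'a \<Rightarrow> 'a set"
  assumes X: "compact X" and into: "sv_map_into X F" and usc: "usc_on X F"
  shows "closed {p. fst p \<in> X \<and> snd p \<in> F (fst p)}"
  unfolding closed_sequential_limits
proof (intro allI impI, elim conjE)
  fix s :: "nat \<Rightarrow> 'a \<times> 'a" and l
  assume sS: "\<forall>n. s n \<in> {p. fst p \<in> X \<and> snd p \<in> F (fst p)}" and lim: "s \<longlonglongrightarrow> l"
  have fl: "(\<lambda>n. fst (s n)) \<longlonglongrightarrow> fst l" and sl: "(\<lambda>n. snd (s n)) \<longlonglongrightarrow> snd l"
    using lim by (auto intro: tendsto_fst tendsto_snd)
  have lX: "fst l \<in> X"
    using closed_sequentially[OF compact_imp_closed[OF X] _ fl] sS by auto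
  have "snd l \<in> F (fst l)"
  proof (rule ccontr)
    assume nin: "snd l \<notin> F (fst l)"
    define A where "A = F (fst l)"
    have A: "A \<noteq> {}" "compact A" "A \<subseteq> X" using into lX unfolding sv_map_into_def A_def by auto
    define e where "e = infdist (snd l) A"
    have e: "0 < e" unfolding e_def using infdist_pos_not_in_closed[OF compact_imp_closed[OF A(2)]] nin A
      unfolding A_def by auto
    define U where "U = X \<inter> {p. infdist p A < e/2}"
    have "open {p. infdist p A < e/2}"
      by (intro open_Collect_less continuous_intros)
    then have Uo: "openin (top_of_set X) U" unfolding U_def by (simp add: openin_open_Int)
    have "A \<subseteq> U" using A e unfolding U_def by auto
    then obtain V where V: "openin (top_of_set X) V" "fst l \<in> V" "\<forall>y\<in>V. F y \<subseteq> U"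
      using usc lX Uo unfolding usc_on_def A_def by meson
    then obtain T where T: "open T" "V = X \<inter> T" by (meson openin_open)
    have "eventually (\<lambda>n. fst (s n) \<in> T) sequentially"
      using topological_tendstoD[OF fl T(1)] V(2) T(2) by auto
    moreover have "eventually (\<lambda>n. infdist (snd (s n)) A > e/2) sequentially"
    proof -
      have "(\<lambda>n. infdist (snd (s n)) A) \<longlonglongrightarrow> e" unfolding e_def by (intro tendsto_intros sl)
      then show ?thesis using e by (intro order_tendstoD) auto
    qed
    ultimately have "eventually (\<lambda>n. False) sequentially"
    proof eventually_elim
      case (elim n)
      then have "fst (s n) \<in> V" using sS T(2) by auto
      then have "snd (s n) \<in> U" using V(3) sS by auto
      then show False using elim unfolding U_def by auto
    qed
    then show False by simp
  qed
  then show "l \<in> {p. fst p \<in> X \<and> snd p \<in> F (fst p)}" using lX by simp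
qed

lemma inverse_lsc:
  fixes X :: "'a::metric_space set" and F :: "'a \<Rightarrow> 'a set"
  assumes "sv_open_map X F"
  shows "lsc_on X (sv_inverse X F)"
  unfolding lsc_on_def
proof (intro ballI allI impI, elim conjE)
  fix y U assume y: "y \<in> X" and U: "openin (top_of_set X) U" and ne: "sv_inverse X F y \<inter> U \<noteq> {}"
  define V where "V = (\<Union>u\<in>U. F u)"
  have "openin (top_of_set X) V" using assms U unfolding sv_open_map_def V_def by auto
  moreover have "y \<in> V" using ne unfolding V_def sv_inverse_def by auto
  moreover have "\<forall>y'\<in>V. sv_inverse X F y' \<inter> U \<noteq> {}"
    using openin_subset[OF U] unfolding V_def sv_inverse_def by auto
  ultimately show "\<exists>V. openin (top_of_set X) V \<and> y \<in> V \<and> (\<forall>y\<in>V. sv_inverse X F y \<inter> U \<noteq> {})"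
    by blast
qed

lemma shadowing_cong:
  assumes "\<And>x. x \<in> X \<Longrightarrow> G1 x = G2 x"
  shows "shadowing X G1 \<longleftrightarrow> shadowing X G2"
proof -
  have "pseudo_orbit X G1 d xs = pseudo_orbit X G2 d xs" for d xs
    unfolding pseudo_orbit_def using assms by auto
  moreover have "sv_orbit X G1 ys = sv_orbit X G2 ys" for ys
    unfolding sv_orbit_def using assms by auto
  ultimately show ?thesis unfolding shadowing_def by simp
qed

lemma orbit_exists:
  assumes "\<And>x. x \<in> X \<Longrightarrow> G x \<noteq> {} \<and> G x \<subseteq> X" "p \<in> X"
  shows "\<exists>orb. orb 0 = p \<and> (\<forall>n. orb n \<in> X \<and> orb (Suc n) \<in> G (orb n))"
proof -
  define orb where "orb = rec_nat p (\<lambda>_ q. SOME q'. q' \<in> G q)"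
  have *: "orb n \<in> X \<and> orb (Suc n) \<in> G (orb n)" for n
  proof (induction n)
    case 0
    have "G p \<noteq> {}" using assms by auto
    then show ?case by (simp add: orb_def assms(2) some_in_eq)
  next
    case (Suc n)
    then have m: "orb (Suc n) \<in> X" using assms(1) by blast
    then have "G (orb (Suc n)) \<noteq> {}" using assms(1) by blast
    then have "orb (Suc (Suc n)) \<in> G (orb (Suc n))" by (simp add: orb_def some_in_eq)
    then show ?case using m by simp
  qed
  show ?thesis using * by (intro exI[of _ orb]) (simp add: orb_def)
qed



lemma unif_lsc:
  fixes X :: "'a::metric_space set" and G :: "'a \<Rightarrow> 'a set"
  assumes X: "compact X" and gr: "closed {p. fst p \<in> X \<and> snd p \<in> G (fst p)}"
    and lsc: "lsc_on X G" and into: "\<And>x. x \<in> X \<Longrightarrow> G x \<subseteq> X" and e: "e > 0"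
  shows "\<exists>d>0. \<forall>z\<in>X. \<forall>w\<in>X. dist z w < d \<longrightarrow> (\<forall>y\<in>G z. infdist y (G w) < e)"
proof (rule ccontr)
  assume neg: "\<not> ?thesis"
  then have "\<forall>n. \<exists>t. fst t \<in> X \<and> fst (snd t) \<in> X \<and> snd (snd t) \<in> X \<and> dist (fst t) (fst (snd t)) < 1 / Suc n
      \<and> snd (snd t) \<in> G (fst t) \<and> infdist (snd (snd t)) (G (fst (snd t))) \<ge> e"
  proof (intro allI)
    fix n :: nat
    have "(1::real) / Suc n > 0" by simp
    then obtain z w y where "z \<in> X" "w \<in> X" "dist z w < 1 / Suc n" "y \<in> G z" "\<not> infdist y (G w) < e"
      using neg by (meson not_less)
    then show "\<exists>t. fst t \<in> X \<and> fst (snd t) \<in> X \<and> snd (snd t) \<in> X \<and> dist (fst t) (fst (snd t)) < 1 / Suc n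
      \<and> snd (snd t) \<in> G (fst t) \<and> infdist (snd (snd t)) (G (fst (snd t))) \<ge> e"
      using into by (intro exI[of _ "(z, w, y)"]) auto
  qed
  then obtain T where T: "\<And>n. fst (T n) \<in> X \<and> fst (snd (T n)) \<in> X \<and> snd (snd (T n)) \<in> X
      \<and> dist (fst (T n)) (fst (snd (T n))) < 1 / Suc n
      \<and> snd (snd (T n)) \<in> G (fst (T n)) \<and> infdist (snd (snd (T n))) (G (fst (snd (T n)))) \<ge> e"
    by metis
  define Z where "Z n = fst (T n)" for n
  define W where "W n = fst (snd (T n))" for n
  define Y where "Y n = snd (snd (T n))" for n
  have T': "Z n \<in> X" "W n \<in> X" "Y n \<in> X" "dist (Z n) (W n) < 1 / Suc n" "Y n \<in> G (Z n)"
      "infdist (Y n) (G (W n)) \<ge> e" for n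
    using T[of n] unfolding Z_def W_def Y_def by auto
  have "seq_compact (X \<times> X \<times> X)" by (intro compact_imp_seq_compact compact_Times X)
  moreover have "\<forall>n. T n \<in> X \<times> X \<times> X" using T by (auto simp: mem_Times_iff)
  ultimately obtain l r where l: "l \<in> X \<times> X \<times> X" and r: "strict_mono (r::nat\<Rightarrow>nat)"
    and lim: "(T \<circ> r) \<longlonglongrightarrow> l"
    by (meson seq_compactE)
  define z where "z = fst l"
  define w where "w = fst (snd l)"
  define y where "y = snd (snd l)"
  have Zl: "(\<lambda>k. Z (r k)) \<longlonglongrightarrow> z" and Wl: "(\<lambda>k. W (r k)) \<longlonglongrightarrow> w" and Yl: "(\<lambda>k. Y (r k)) \<longlonglongrightarrow> y"
    using lim unfolding Z_def W_def Y_def z_def w_def y_def o_def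
    by (auto intro: tendsto_fst tendsto_snd)
  have zX: "z \<in> X" using l z_def by (auto simp: mem_Times_iff)
  have "(\<lambda>k. dist (Z (r k)) (W (r k))) \<longlonglongrightarrow> 0"
  proof (rule tendsto_sandwich[of "\<lambda>_. 0" _ _ "\<lambda>k. 1 / Suc k"])
    show "\<forall>\<^sub>F n in sequentially. 0 \<le> dist (Z (r n)) (W (r n))" by simp
    show "\<forall>\<^sub>F n in sequentially. dist (Z (r n)) (W (r n)) \<le> 1 / real (Suc n)"
    proof (intro always_eventually allI)
      fix k
      have "k \<le> r k" using seq_suble[OF r] by simp
      then have "1 / real (Suc (r k)) \<le> 1 / real (Suc k)" by (intro divide_left_mono) auto
      then show "dist (Z (r k)) (W (r k)) \<le> 1 / real (Suc k)" using T'(4)[of "r k"] by linarith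
    qed
    show "(\<lambda>_. 0::real) \<longlonglongrightarrow> 0" by simp
    show "(\<lambda>k. 1 / real (Suc k)) \<longlonglongrightarrow> 0" using LIMSEQ_Suc[OF lim_const_over_n[of 1]] by simp
  qed
  moreover have "(\<lambda>k. dist (Z (r k)) (W (r k))) \<longlonglongrightarrow> dist z w" by (intro tendsto_intros Zl Wl)
  ultimately have "dist z w = 0" using LIMSEQ_unique by blast
  then have Wz: "(\<lambda>k. W (r k)) \<longlonglongrightarrow> z" using Wl by simp
  have "(z, y) \<in> {p. fst p \<in> X \<and> snd p \<in> G (fst p)}"
    by (rule closed_sequentially[OF gr, of "\<lambda>k. (Z (r k), Y (r k))"])
       (auto simp: T' intro: tendsto_Pair Zl Yl)
  then have yG: "y \<in> G z" by simp
  define U where "U = X \<inter> ball y (e/2)"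
  have Uo: "openin (top_of_set X) U" unfolding U_def by (simp add: openin_open_Int)
  have "y \<in> G z \<inter> U" using yG into zX e unfolding U_def by auto
  then obtain V where V: "openin (top_of_set X) V" "z \<in> V" "\<forall>u\<in>V. G u \<inter> U \<noteq> {}"
    using lsc zX Uo unfolding lsc_on_def by blast
  then obtain S where S: "open S" "V = X \<inter> S" by (meson openin_open)
  have "eventually (\<lambda>k. W (r k) \<in> S) sequentially"
    using topological_tendstoD[OF Wz S(1)] V(2) S(2) by auto
  moreover have "eventually (\<lambda>k. dist (Y (r k)) y < e/2) sequentially"
    using tendstoD[OF Yl, of "e/2"] e by simp
  ultimately have "eventually (\<lambda>k. False) sequentially"
  proof eventually_elim
    case (elim k)
    then have "W (r k) \<in> V" using S(2) T' by auto
    then obtain p where p: "p \<in> G (W (r k))" "p \<in> U" using V(3) by blast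
    then have "dist y p < e/2" unfolding U_def by auto
    then have "dist (Y (r k)) p < e" using elim dist_triangle[of "Y (r k)" p y] by linarith
    then have "infdist (Y (r k)) (G (W (r k))) < e" using infdist_le[OF p(1), of "Y (r k)"] by linarith
    then show False using T'(6)[of "r k"] by linarith
  qed
  then show False by simp
qed

lemma core:
  fixes X :: "'a::metric_space set" and G :: "'a \<Rightarrow> 'a set"
  assumes X: "compact X"
    and grG: "closed {p. fst p \<in> X \<and> snd p \<in> G (fst p)}"
    and grH: "closed {p. fst p \<in> X \<and> snd p \<in> sv_inverse X G (fst p)}"
    and lsc: "lsc_on X G"
    and Gv: "\<And>x. x \<in> X \<Longrightarrow> G x \<noteq> {} \<and> G x \<subseteq> X"
    and Hne: "\<And>y. y \<in> X \<Longrightarrow> sv_inverse X G y \<noteq> {}"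
    and sh: "shadowing X G"
  shows "shadowing X (sv_inverse X G)"
  unfolding shadowing_def
proof (intro allI impI)
  fix \<epsilon> :: real assume \<epsilon>: "\<epsilon> > 0"
  obtain \<delta>' where \<delta>': "\<delta>' > 0" and S: "\<And>xs. pseudo_orbit X G \<delta>' xs \<Longrightarrow>
      \<exists>ys. sv_orbit X G ys \<and> (\<forall>n. dist (xs n) (ys n) < \<epsilon>/2)"
    using sh \<epsilon> unfolding shadowing_def by (meson half_gt_zero)
  obtain \<eta> where \<eta>: "\<eta> > 0" and U: "\<And>z w. z \<in> X \<Longrightarrow> w \<in> X \<Longrightarrow> dist z w < \<eta> \<Longrightarrow>
      (\<forall>y\<in>G z. infdist y (G w) < \<delta>')"
  proof -
    have "\<exists>d>0. \<forall>z\<in>X. \<forall>w\<in>X. dist z w < d \<longrightarrow> (\<forall>y\<in>G z. infdist y (G w) < \<delta>')"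
      by (rule unif_lsc[OF X grG lsc _ \<delta>']) (use Gv in blast)
    then show ?thesis using that by blast
  qed
  show "\<exists>\<delta>>0. \<forall>xs. pseudo_orbit X (sv_inverse X G) \<delta> xs \<longrightarrow>
        (\<exists>ys. sv_orbit X (sv_inverse X G) ys \<and> (\<forall>n. dist (xs n) (ys n) < \<epsilon>))"
  proof (intro exI[of _ \<eta>] conjI allI impI \<eta>)
    fix xs assume po: "pseudo_orbit X (sv_inverse X G) \<eta> xs"
    have xsX: "\<And>n. xs n \<in> X" using po unfolding pseudo_orbit_def by auto
    have bk: "infdist (xs n) (G (xs (Suc n))) < \<delta>'" for n
    proof -
      have "infdist (xs (Suc n)) (sv_inverse X G (xs n)) < \<eta>" using po unfolding pseudo_orbit_def by auto
      then obtain z where z: "z \<in> sv_inverse X G (xs n)" "dist (xs (Suc n)) z < \<eta>"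
        using infdist_lessE[OF Hne[OF xsX[of n]]] by blast
      then have "z \<in> X" "xs n \<in> G z" unfolding sv_inverse_def by auto
      then show ?thesis using U[of z "xs (Suc n)"] xsX z(2) by (simp add: dist_commute)
    qed
    obtain orb where orb: "orb 0 = xs 0" "\<And>n. orb n \<in> X" "\<And>n. orb (Suc n) \<in> G (orb n)"
      using orbit_exists[of X G "xs 0"] Gv xsX by blast
    define u where "u N k = (if k \<le> N then xs (N - k) else orb (k - N))" for N k
    have upo: "pseudo_orbit X G \<delta>' (u N)" for N
      unfolding pseudo_orbit_def
    proof (intro conjI allI)
      fix k show "u N k \<in> X" unfolding u_def using xsX orb by auto
    next
      fix k
      show "infdist (u N (Suc k)) (G (u N k)) < \<delta>'"
      proof (cases "Suc k \<le> N")
        case True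
        then have "u N (Suc k) = xs (N - Suc k)" "u N k = xs (Suc (N - Suc k))"
          unfolding u_def by (auto simp: Suc_diff_Suc)
        then show ?thesis using bk by simp
      next
        case False
        then have kN: "N \<le> k" by simp
        have "u N (Suc k) = orb (Suc k - N)" unfolding u_def using False by simp
        also have "Suc k - N = Suc (k - N)" using kN by (rule Suc_diff_le)
        finally have e1: "u N (Suc k) = orb (Suc (k - N))" .
        have e2: "u N k = orb (k - N)"
        proof (cases "k = N")
          case True then show ?thesis unfolding u_def using orb(1) by simp
        next
          case False then show ?thesis unfolding u_def using kN by simp
        qed
        note e1 e2
        then have "u N (Suc k) \<in> G (u N k)" using orb(3) by simp
        then show ?thesis using \<delta>' by simp
      qed
    qed
    have "\<forall>N. \<exists>ys. sv_orbit X G ys \<and> (\<forall>n. dist (u N n) (ys n) < \<epsilon>/2)"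
      using S upo by blast
    from choice[OF this] obtain YS where YS0: "\<forall>N. sv_orbit X G (YS N) \<and> (\<forall>n. dist (u N n) (YS N n) < \<epsilon>/2)"
      by blast
    have YS: "\<And>N. sv_orbit X G (YS N)" "\<And>N n. dist (u N n) (YS N n) < \<epsilon>/2" using YS0 by auto
    define W where "W N j = (if j \<le> N then YS N (N - j) else xs j)" for N j
    have W1: "W N j \<in> X" for N j
      using YS(1)[of N] xsX[of j] unfolding W_def sv_orbit_def by simp
    have W2: "W N (Suc j) \<in> sv_inverse X G (W N j)" if "j < N" for N j
    proof -
      have a: "YS N (Suc (N - Suc j)) \<in> G (YS N (N - Suc j))" "YS N (N - Suc j) \<in> X"
        using YS(1)[of N] unfolding sv_orbit_def by blast+
      have b: "Suc (N - Suc j) = N - j" using that by simp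
      have c: "W N (Suc j) = YS N (N - Suc j)" "W N j = YS N (N - j)" using that unfolding W_def by simp_all
      show ?thesis unfolding c sv_inverse_def using a b by simp
    qed
    have W3: "dist (xs j) (W N j) \<le> \<epsilon>/2" for N j
    proof (cases "j \<le> N")
      case True
      then have "u N (N - j) = xs j" unfolding u_def by simp
      then show ?thesis using YS(2)[of N "N - j"] True unfolding W_def by simp
    next
      case False then show ?thesis using \<epsilon> unfolding W_def by simp
    qed
    obtain w where w: "\<forall>n. w n \<in> X" "\<forall>n. w (Suc n) \<in> sv_inverse X G (w n)" "\<forall>n. dist (xs n) (w n) \<le> \<epsilon>/2"
      using limit_orbit[OF X grH, of W xs "\<epsilon>/2"] W1 W2 W3 by blast
    show "\<exists>ys. sv_orbit X (sv_inverse X G) ys \<and> (\<forall>n. dist (xs n) (ys n) < \<epsilon>)"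
    proof (intro exI[of _ w] conjI allI)
      show "sv_orbit X (sv_inverse X G) w" using w(1,2) unfolding sv_orbit_def by blast
      fix n show "dist (xs n) (w n) < \<epsilon>" using w(3)[rule_format, of n] \<epsilon> by linarith
    qed
  qed
qed

theorem mainTheorem7:
  fixes X :: "'a::metric_space set" and F :: "'a \<Rightarrow> 'a set"
  assumes "compact X"
    and "sv_map_into X F"
    and "sv_open_map X F"
    and "sv_onto X F"
    and "sv_continuous_on X F"
  shows "shadowing X F \<longleftrightarrow> shadowing X (sv_inverse X F)"
proof -
  note X = assms(1)
  have Fv: "\<And>x. x \<in> X \<Longrightarrow> F x \<noteq> {} \<and> F x \<subseteq> X" using assms(2) unfolding sv_map_into_def by auto
  have usc: "usc_on X F" and lscF: "lsc_on X F" using assms(5) unfolding sv_continuous_on_def by auto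
  define H where "H = sv_inverse X F"
  have grF: "closed {p. fst p \<in> X \<and> snd p \<in> F (fst p)}" by (rule closed_graph[OF X assms(2) usc])
  have eqH: "{p. fst p \<in> X \<and> snd p \<in> H (fst p)} = (\<lambda>p. (snd p, fst p)) -` {p. fst p \<in> X \<and> snd p \<in> F (fst p)}"
    unfolding H_def sv_inverse_def using Fv by auto
  have grH: "closed {p. fst p \<in> X \<and> snd p \<in> H (fst p)}"
    unfolding eqH by (intro continuous_closed_vimage grF continuous_intros)
  have Hne: "\<And>y. y \<in> X \<Longrightarrow> H y \<noteq> {}" using assms(4) unfolding sv_onto_def H_def sv_inverse_def by auto
  have HH: "\<And>x. x \<in> X \<Longrightarrow> sv_inverse X H x = F x"
    unfolding H_def sv_inverse_def using Fv by auto
  have lscH: "lsc_on X H" unfolding H_def by (rule inverse_lsc[OF assms(3)])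
  have Hv: "\<And>x. x \<in> X \<Longrightarrow> H x \<noteq> {} \<and> H x \<subseteq> X" using Hne unfolding H_def sv_inverse_def by auto
  have grHH: "closed {p. fst p \<in> X \<and> snd p \<in> sv_inverse X H (fst p)}"
  proof -
    have "{p. fst p \<in> X \<and> snd p \<in> sv_inverse X H (fst p)} = {p. fst p \<in> X \<and> snd p \<in> F (fst p)}"
      using HH by auto
    then show ?thesis using grF by simp
  qed
  have HHne: "\<And>y. y \<in> X \<Longrightarrow> sv_inverse X H y \<noteq> {}" using HH Fv by auto
  show ?thesis
  proof
    assume "shadowing X F"
    then show "shadowing X (sv_inverse X F)"
      using core[OF X grF grH[unfolded H_def] lscF Fv Hne[unfolded H_def]] by blast
  next
    assume "shadowing X (sv_inverse X F)"
    then have "shadowing X (sv_inverse X H)"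
      using core[OF X grH grHH lscH Hv HHne] unfolding H_def by blast
    then show "shadowing X F" using shadowing_cong[of X "sv_inverse X H" F] HH by blast
  qed
qed


end
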